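(* Let $X\in\mathbb{Z}^{n\times m}$ with $n\le m$ be a random matrix with independent entries that are sub-Poisson with variance proxy $\sigma^2$ and satisfy $\mathbb{E}|X_{ij}|\le\sigma^2$. Let $M_{ij}=\mathbb{I}(i\ne j)$ and, for $t\ge 0$, $$\xi_i=\mathbb{I}\Big(\|((|X||X|^\top)\odot M)_{i:}\|_1\le(4+5t)\,nm\sigma^4\Big),\quad i\in[n].$$ If $8\log(en)\le m\sigma^2$ and $6e^2n\sigma^2\le1$, then $$\Pr\Big(\frac1n\sum_{i=1}^n\xi_i\le1-s\Big)\le\frac1s\Big(\sqrt t\exp\Big(-\frac{\sqrt t\,nm\sigma^4}{10\sqrt6}\Big)+3n^{-\sqrt t/(2\sqrt6)}\Big)$$ for all $s>0$ and all $t\ge6\vee\frac{96\log^2m}{\log^2(1/(6en\sigma^2))}$.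
   Context: A real random variable $Y$ is sub-Poisson with variance proxy $\sigma^2\ge0$ if $\mathbb{E}e^{\lambda(Y-\mathbb{E}Y)}\le\exp\{\sigma^2(e^{|\lambda|}-1-|\lambda|)\}$ for all $\lambda\in\mathbb{R}$. $|X|$ is the entrywise absolute value, $\odot$ the entrywise product, $\|\cdot\|_1$ the $\ell_1$ norm of a row, $\vee=\max$. *)

theory Defs
  imports "HOL-Probability.Probability"
begin

text \<open>Sub-Poisson random variable with variance proxy sigma2 (sigma2 = sigma squared).
  Expectations are Bochner integrals, so integrability is required explicitly.\<close>
definition sub_poisson :: "'a measure \<Rightarrow> ('a \<Rightarrow> real) \<Rightarrow> real \<Rightarrow> bool" where
  "sub_poisson M Y sigma2 \<longleftrightarrow> sigma2 \<ge> 0 \<and> integrable M Y \<and>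
     (\<forall>l::real. integrable M (\<lambda>x. exp (l * (Y x - integral\<^sup>L M Y))) \<and>
        integral\<^sup>L M (\<lambda>x. exp (l * (Y x - integral\<^sup>L M Y)))
          \<le> exp (sigma2 * (exp \<bar>l\<bar> - 1 - \<bar>l\<bar>)))"

text \<open>l1 norm of row i of ((|X| |X|^T) odot M) with M_ik = [i \<noteq> k], for an n x m matrix.\<close>
definition offdiag_row_norm :: "nat \<Rightarrow> nat \<Rightarrow> (nat \<Rightarrow> nat \<Rightarrow> real) \<Rightarrow> nat \<Rightarrow> real" where
  "offdiag_row_norm n m A i =
     (\<Sum>k\<in>{0..<n} - {i}. \<bar>\<Sum>j<m. \<bar>A i j\<bar> * \<bar>A k j\<bar>\<bar>)"

end

theory Submission
  imports Defs
begin

lemma exp_abs_ineq: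
  fixes mu y :: real assumes "0 \<le> mu"
  shows "exp (mu * \<bar>y\<bar>) \<le> exp (mu * y) + exp (- (mu * y)) - 1 + mu * \<bar>y\<bar>"
proof -
  have "exp (mu * \<bar>y\<bar>) + exp (- (mu * \<bar>y\<bar>)) = exp (mu * y) + exp (- (mu * y))"
    by (cases "y \<ge> 0") auto
  moreover have "1 - mu * \<bar>y\<bar> \<le> exp (- (mu * \<bar>y\<bar>))"
    using exp_ge_add_one_self[of "- (mu * \<bar>y\<bar>)"] by simp
  ultimately show ?thesis by linarith
qed

lemma real_ineq1:
  fixes c d :: real assumes c0: "0 \<le> c" and "0 \<le> d" and dc: "d \<le> c"
  shows "2 * exp c - 1 + d \<le> exp (3 * c)"
proof -
  have e2: "exp (2*c) = exp c * exp c" by (simp add: exp_add[symmetric])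
  have e3: "exp (3*c) = exp (2*c) * exp c" by (simp add: exp_add[symmetric])
  have "0 \<le> (exp c - 1) * (exp c - 1)" by simp
  then have h1: "2 * exp c - 1 \<le> exp (2*c)" unfolding e2 by (simp add: algebra_simps)
  have g1: "1 \<le> exp (2*c)" using c0 by simp
  have h2: "c \<le> exp (2*c) * c" using mult_right_mono[OF g1 c0] by simp
  have h3: "exp (2*c) * (1 + c) \<le> exp (2*c) * exp c"
    using exp_ge_add_one_self[of c] by (intro mult_left_mono) auto
  have "2 * exp c - 1 + d \<le> exp (2*c) * (1 + c)" using h1 h2 dc by (simp add: algebra_simps)
  then show ?thesis using h3 e3 by linarith
qed

lemma mgf_abs:
  assumes P: "prob_space M" and sp: "sub_poisson M Y v"
    and ab: "integral\<^sup>L M (\<lambda>x. \<bar>Y x\<bar>) \<le> v" and mu: "0 \<le> mu"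
    and [measurable]: "Y \<in> borel_measurable M"
  shows "integrable M (\<lambda>x. exp (mu * \<bar>Y x\<bar>))"
    and "integral\<^sup>L M (\<lambda>x. exp (mu * \<bar>Y x\<bar>)) \<le> exp (3 * v * (exp mu - 1))"
proof -
  interpret prob_space M by fact
  define E where "E = integral\<^sup>L M Y"
  have v0: "0 \<le> v" and iY: "integrable M Y" using sp unfolding sub_poisson_def by auto
  have i1: "integrable M (\<lambda>x. exp (mu * (Y x - E)))"
   and b1: "integral\<^sup>L M (\<lambda>x. exp (mu * (Y x - E))) \<le> exp (v * (exp mu - 1 - mu))"
    using sp mu unfolding sub_poisson_def E_def by (auto dest: spec[of _ mu])
  have i2: "integrable M (\<lambda>x. exp ((-mu) * (Y x - E)))"
   and b2: "integral\<^sup>L M (\<lambda>x. exp ((-mu) * (Y x - E))) \<le> exp (v * (exp mu - 1 - mu))"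
    using sp mu unfolding sub_poisson_def E_def by (auto dest: spec[of _ "-mu"])
  have eq1: "(\<lambda>x. exp (mu * Y x)) = (\<lambda>x. exp (mu * E) * exp (mu * (Y x - E)))"
    by (rule ext) (simp add: exp_add[symmetric] algebra_simps)
  have eq2: "(\<lambda>x. exp (- (mu * Y x))) = (\<lambda>x. exp (- (mu * E)) * exp ((-mu) * (Y x - E)))"
    by (rule ext) (simp add: exp_add[symmetric] algebra_simps)
  have j1: "integrable M (\<lambda>x. exp (mu * Y x))" unfolding eq1 using i1 by simp
  have j2: "integrable M (\<lambda>x. exp (- (mu * Y x)))" unfolding eq2 using i2 by simp
  have iA: "integrable M (\<lambda>x. \<bar>Y x\<bar>)" using iY by simp
  have jR: "integrable M (\<lambda>x. exp (mu * Y x) + exp (- (mu * Y x)) - 1 + mu * \<bar>Y x\<bar>)"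
    using j1 j2 iA by simp
  show iL: "integrable M (\<lambda>x. exp (mu * \<bar>Y x\<bar>))"
    by (rule Bochner_Integration.integrable_bound[OF jR]) (auto intro!: AE_I2 simp: exp_abs_ineq[OF mu] order_trans[OF _ exp_abs_ineq[OF mu]])
  have absE: "\<bar>E\<bar> \<le> v"
    using order_trans[OF integral_abs_bound[of M Y] ab] unfolding E_def by simp
  define c where "c = v * (exp mu - 1)"
  have c0: "0 \<le> c" using v0 mu by (simp add: c_def)
  have "mu \<le> exp mu - 1" using exp_ge_add_one_self[of mu] by linarith
  then have "mu * v \<le> (exp mu - 1) * v" by (rule mult_right_mono) (rule v0)
  then have muc: "mu * v \<le> c" unfolding c_def by (simp add: mult.commute)
  have k1: "integral\<^sup>L M (\<lambda>x. exp (mu * Y x)) \<le> exp c"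
  proof -
    have "integral\<^sup>L M (\<lambda>x. exp (mu * Y x)) = exp (mu * E) * integral\<^sup>L M (\<lambda>x. exp (mu * (Y x - E)))"
      unfolding eq1 by simp
    also have "\<dots> \<le> exp (mu * E) * exp (v * (exp mu - 1 - mu))"
      using b1 by (intro mult_left_mono) auto
    also have "\<dots> = exp (mu * E + v * (exp mu - 1 - mu))" by (rule exp_add[symmetric])
    also have "\<dots> \<le> exp c"
    proof -
      have "mu * E \<le> mu * v" using absE mu by (intro mult_left_mono) auto
      moreover have "c = v * (exp mu - 1 - mu) + mu * v" by (simp add: c_def algebra_simps)
      ultimately show ?thesis by simp
    qed
    finally show ?thesis .
  qed
  have k2: "integral\<^sup>L M (\<lambda>x. exp (- (mu * Y x))) \<le> exp c"
  proof -
    have "integral\<^sup>L M (\<lambda>x. exp (- (mu * Y x))) = exp (- (mu * E)) * integral\<^sup>L M (\<lambda>x. exp ((-mu) * (Y x - E)))"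
      unfolding eq2 by simp
    also have "\<dots> \<le> exp (- (mu * E)) * exp (v * (exp mu - 1 - mu))"
      using b2 by (intro mult_left_mono) auto
    also have "\<dots> = exp (- (mu * E) + v * (exp mu - 1 - mu))" by (rule exp_add[symmetric])
    also have "\<dots> \<le> exp c"
    proof -
      have "mu * (- E) \<le> mu * v" using absE mu by (intro mult_left_mono) auto
      moreover have "c = v * (exp mu - 1 - mu) + mu * v" by (simp add: c_def algebra_simps)
      ultimately show ?thesis by simp
    qed
    finally show ?thesis .
  qed
  have "integral\<^sup>L M (\<lambda>x. exp (mu * \<bar>Y x\<bar>)) \<le> integral\<^sup>L M (\<lambda>x. exp (mu * Y x) + exp (- (mu * Y x)) - 1 + mu * \<bar>Y x\<bar>)"
    by (rule integral_mono[OF iL jR]) (rule exp_abs_ineq[OF mu])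
  also have "\<dots> = integral\<^sup>L M (\<lambda>x. exp (mu * Y x)) + integral\<^sup>L M (\<lambda>x. exp (- (mu * Y x))) - 1 + mu * integral\<^sup>L M (\<lambda>x. \<bar>Y x\<bar>)"
    using j1 j2 iA by (simp add: prob_space)
  also have "\<dots> \<le> 2 * exp c - 1 + mu * v"
    using k1 k2 mult_left_mono[OF ab mu] by simp
  also have "\<dots> \<le> exp (3 * c)"
    by (rule real_ineq1) (use c0 muc mu v0 in auto)
  finally show "integral\<^sup>L M (\<lambda>x. exp (mu * \<bar>Y x\<bar>)) \<le> exp (3 * v * (exp mu - 1))"
    by (simp add: c_def mult.assoc)
qed



lemma tail_abs:
  assumes P: "prob_space M" and sp: "sub_poisson M Y v"
    and ab: "integral\<^sup>L M (\<lambda>x. \<bar>Y x\<bar>) \<le> v" and mu: "0 \<le> mu"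
    and [measurable]: "Y \<in> borel_measurable M"
  shows "measure M {x\<in>space M. K \<le> \<bar>Y x\<bar>} \<le> exp (3 * v * (exp mu - 1)) / exp (mu * K)"
proof -
  interpret prob_space M by fact
  have "measure M {x\<in>space M. K \<le> \<bar>Y x\<bar>} \<le> measure M {x\<in>space M. exp (mu * K) \<le> exp (mu * \<bar>Y x\<bar>)}"
    by (rule finite_measure_mono) (auto intro: mult_left_mono[OF _ mu])
  also have "\<dots> \<le> integral\<^sup>L M (\<lambda>x. exp (mu * \<bar>Y x\<bar>)) / exp (mu * K)"
    by (rule integral_Markov_inequality_measure[where A="space M"]) (auto intro: mgf_abs[OF P sp ab mu])
  also have "\<dots> \<le> exp (3 * v * (exp mu - 1)) / exp (mu * K)"
    by (rule divide_right_mono) (auto intro: mgf_abs[OF P sp ab mu])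
  finally show ?thesis .
qed

lemma exp_convex_ineq:
  fixes u s :: real assumes "0 \<le> u" "u \<le> 1"
  shows "exp (u * s) \<le> 1 + u * (exp s - 1)"
proof -
  have "exp ((1 - u) *\<^sub>R 0 + u *\<^sub>R s) \<le> (1 - u) * exp 0 + u * exp s"
    by (rule convex_onD[OF exp_convex]) (use assms in auto)
  then show ?thesis by (simp add: algebra_simps)
qed

lemma meas_test:
  fixes K :: real and i j n :: nat
  assumes "i < n"
  shows "(\<lambda>f. exp (min \<bar>f (i,j)\<bar> K * (\<Sum>k\<in>{0..<n}-{i}. \<bar>f (k,j)\<bar>) / K))
     \<in> borel_measurable (PiM ({0..<n}\<times>{j}) (\<lambda>_. borel))"
  apply measurable
  using assms apply auto[1]
  apply measurable
  apply measurable
  done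



lemma column_indep:
  fixes M :: "'a measure" and X :: "nat \<Rightarrow> nat \<Rightarrow> 'a \<Rightarrow> real"
  assumes P: "prob_space M"
    and ind: "prob_space.indep_vars M (\<lambda>_. borel) (\<lambda>(i, j). X i j) ({0..<n} \<times> {0..<m})"
    and meas[measurable]: "\<And>i j. X i j \<in> borel_measurable M"
    and intX: "\<And>k. k < n \<Longrightarrow> integrable M (X k j)"
    and intE: "\<And>k. k < n \<Longrightarrow> integrable M (\<lambda>x. exp \<bar>X k j x\<bar>)"
    and i: "i < n" and j: "j < m" and K0: "0 \<le> K"
  shows "integrable M (\<lambda>x. min \<bar>X i j x\<bar> K * (\<Prod>k\<in>{0..<n}-{i}. exp \<bar>X k j x\<bar>))"
    and "integral\<^sup>L M (\<lambda>x. min \<bar>X i j x\<bar> K * (\<Prod>k\<in>{0..<n}-{i}. exp \<bar>X k j x\<bar>))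
         = integral\<^sup>L M (\<lambda>x. min \<bar>X i j x\<bar> K) * (\<Prod>k\<in>{0..<n}-{i}. integral\<^sup>L M (\<lambda>x. exp \<bar>X k j x\<bar>))"
proof -
  interpret prob_space M by fact
  define C where "C = (\<lambda>k. (k, j)) ` {0..<n}"
  define F where "F = (\<lambda>(p :: nat \<times> nat) (z :: real). if fst p = i then min \<bar>z\<bar> K else exp \<bar>z\<bar>)"
  define G where "G = (\<lambda>p x. F p ((\<lambda>(i, j). X i j) p x))"
  have Csub: "C \<subseteq> {0..<n} \<times> {0..<m}" using j unfolding C_def by auto
  have indC: "indep_vars (\<lambda>_. borel) G C"
    unfolding G_def
    by (rule indep_vars_compose2[OF indep_vars_subset[OF ind Csub]]) (auto simp: F_def)
  have intY: "integrable M (\<lambda>x. min \<bar>X i j x\<bar> K)"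
    by (rule Bochner_Integration.integrable_bound[of _ "X i j"]) (use K0 in \<open>auto intro!: intX[OF i] AE_I2\<close>)
  have intG: "integrable M (G p)" if pC: "p \<in> C" for p
  proof -
    obtain k where k: "p = (k, j)" "k < n" using pC unfolding C_def by auto
    show ?thesis by (cases "k = i") (use k intY intE in \<open>auto simp: G_def F_def\<close>)
  qed
  have fin: "finite C" unfolding C_def by auto
  have inj: "inj_on (\<lambda>k. (k, j)) {0..<n}" by (auto simp: inj_on_def)
  have prodeq: "\<And>f :: nat \<times> nat \<Rightarrow> real. (\<Prod>p\<in>C. f p) = f (i, j) * (\<Prod>k\<in>{0..<n}-{i}. f (k, j))"
    unfolding C_def using i by (simp add: prod.reindex[OF inj] prod.remove[of "{0..<n}" i])
  have ptw: "\<And>x. (\<Prod>p\<in>C. G p x) = min \<bar>X i j x\<bar> K * (\<Prod>k\<in>{0..<n}-{i}. exp \<bar>X k j x\<bar>)"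
    unfolding prodeq G_def F_def by (auto intro!: prod.cong)
  have "integrable M (\<lambda>x. \<Prod>p\<in>C. G p x)"
    by (rule indep_vars_integrable[OF fin indC intG])
  then show "integrable M (\<lambda>x. min \<bar>X i j x\<bar> K * (\<Prod>k\<in>{0..<n}-{i}. exp \<bar>X k j x\<bar>))"
    unfolding ptw .
  have "integral\<^sup>L M (\<lambda>x. \<Prod>p\<in>C. G p x) = (\<Prod>p\<in>C. integral\<^sup>L M (G p))"
    by (rule indep_vars_lebesgue_integral[OF fin indC intG])
  also have "\<dots> = integral\<^sup>L M (G (i, j)) * (\<Prod>k\<in>{0..<n}-{i}. integral\<^sup>L M (G (k, j)))"
    by (rule prodeq)
  also have "\<dots> = integral\<^sup>L M (\<lambda>x. min \<bar>X i j x\<bar> K) * (\<Prod>k\<in>{0..<n}-{i}. integral\<^sup>L M (\<lambda>x. exp \<bar>X k j x\<bar>))"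
    unfolding G_def F_def by (auto intro!: prod.cong)
  finally show "integral\<^sup>L M (\<lambda>x. min \<bar>X i j x\<bar> K * (\<Prod>k\<in>{0..<n}-{i}. exp \<bar>X k j x\<bar>))
         = integral\<^sup>L M (\<lambda>x. min \<bar>X i j x\<bar> K) * (\<Prod>k\<in>{0..<n}-{i}. integral\<^sup>L M (\<lambda>x. exp \<bar>X k j x\<bar>))"
    unfolding ptw .
qed

lemma row_bound:
  fixes M :: "'a measure" and X :: "nat \<Rightarrow> nat \<Rightarrow> 'a \<Rightarrow> real"
  assumes P: "prob_space M"
    and ind: "prob_space.indep_vars M (\<lambda>_. borel) (\<lambda>(i, j). X i j) ({0..<n} \<times> {0..<m})"
    and meas[measurable]: "\<And>i j. X i j \<in> borel_measurable M"
    and sp: "\<And>i j. i < n \<Longrightarrow> j < m \<Longrightarrow> sub_poisson M (X i j) v"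
    and ab: "\<And>i j. i < n \<Longrightarrow> j < m \<Longrightarrow> integral\<^sup>L M (\<lambda>x. \<bar>X i j x\<bar>) \<le> v"
    and v0: "0 < v" and vn: "6 * (exp 1)\<^sup>2 * real n * v \<le> 1"
    and n1: "1 \<le> n" and m1: "1 \<le> m"
    and Kdef: "K = sqrt t / (2 * sqrt 6)" and t6: "6 \<le> t"
    and lnm: "ln (real m) \<le> K * ln (1 / (6 * exp 1 * real n * v))"
    and i: "i < n"
  shows "measure M {x \<in> space M. \<not> offdiag_row_norm n m (\<lambda>i j. X i j x) i \<le> (4 + 5 * t) * real n * real m * v\<^sup>2}
         \<le> sqrt t * exp (- (sqrt t * real n * real m * v\<^sup>2 / (10 * sqrt 6))) + 3 * real n powr (- (sqrt t / (2 * sqrt 6)))"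
proof -
  interpret prob_space M by fact
  have K0: "0 < K" using t6 unfolding Kdef by auto
  define A where "A = {0..<n} - {i}"
  define S where "S j x = (\<Sum>k\<in>A. \<bar>X k j x\<bar>)" for j x
  define Yt where "Yt j x = min \<bar>X i j x\<bar> K" for j x
  define Z where "Z j x = exp (Yt j x * S j x / K)" for j x
  define a where "a = (4 + 5 * t) * real n * real m * v\<^sup>2"
  define row where "row x = offdiag_row_norm n m (\<lambda>i j. X i j x) i" for x
  have row_eq: "row x = (\<Sum>j<m. \<bar>X i j x\<bar> * S j x)" for x
    unfolding row_def offdiag_row_norm_def S_def A_def
    by (simp add: abs_of_nonneg sum_nonneg sum_distrib_left) (rule sum.swap)
  define E1 where "E1 = {x\<in>space M. \<exists>j<m. K < \<bar>X i j x\<bar>}"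
  define E2 where "E2 = {x\<in>space M. exp (a / K) \<le> (\<Prod>j<m. Z j x)}"
  have [measurable]: "E1 \<in> sets M" unfolding E1_def by measurable
  have [measurable]: "E2 \<in> sets M" unfolding E2_def Z_def Yt_def S_def by measurable
  have sub: "{x \<in> space M. \<not> row x \<le> a} \<subseteq> E1 \<union> E2"
  proof
    fix x assume x: "x \<in> {x \<in> space M. \<not> row x \<le> a}"
    show "x \<in> E1 \<union> E2"
    proof (cases "x \<in> E1")
      case False
      then have le: "\<And>j. j < m \<Longrightarrow> \<bar>X i j x\<bar> \<le> K" using x unfolding E1_def by auto
      have "(\<Prod>j<m. Z j x) = exp (\<Sum>j<m. Yt j x * S j x / K)"
        unfolding Z_def by (simp add: exp_sum)
      also have "(\<Sum>j<m. Yt j x * S j x / K) = row x / K"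
        unfolding row_eq Yt_def using le by (simp add: sum_divide_distrib)
      finally have "(\<Prod>j<m. Z j x) = exp (row x / K)" .
      moreover have "a / K \<le> row x / K" using x K0 by (auto intro: divide_right_mono)
      ultimately show ?thesis using x unfolding E2_def by auto
    qed auto
  qed
  have bad_eq: "{x \<in> space M. \<not> offdiag_row_norm n m (\<lambda>i j. X i j x) i \<le> (4 + 5 * t) * real n * real m * v\<^sup>2}
      = {x \<in> space M. \<not> row x \<le> a}" unfolding row_def a_def by simp
  have [measurable]: "{x \<in> space M. \<not> row x \<le> a} \<in> sets M"
    unfolding row_def offdiag_row_norm_def by measurable
  have split: "measure M {x \<in> space M. \<not> row x \<le> a} \<le> measure M E1 + measure M E2"
    using finite_measure_mono[OF sub] measure_Un_le[of E1 M E2] by simp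
  define Aa where "Aa = 1 / (6 * exp 1 * v)"
  define L where "L = ln (1 / (6 * exp 1 * real n * v))"
  have nv: "real n * v \<le> 1 / (6 * (exp 1)\<^sup>2)" using vn by (simp add: field_simps)
  have Aa_pos: "0 < Aa" unfolding Aa_def using v0 by simp
  have Aa_eq: "Aa = real n * (1 / (6 * exp 1 * real n * v))" unfolding Aa_def using n1 by simp
  have inner_ge: "exp 1 \<le> 1 / (6 * exp 1 * real n * v)"
  proof -
    have eq: "exp 1 * (6 * exp 1 * real n * v) = 6 * (exp 1)\<^sup>2 * real n * v" by (simp add: power2_eq_square)
    have "exp 1 * (6 * exp 1 * real n * v) \<le> 1" using vn eq by linarith
    moreover have "0 < 6 * exp 1 * real n * v" using v0 n1 by simp
    ultimately show ?thesis by (simp add: field_simps)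
  qed
  have L1: "1 \<le> L" unfolding L_def using inner_ge
    by (metis ln_exp exp_gt_zero ln_le_cancel_iff order_less_le_trans)
  have lnAa: "ln Aa = ln (real n) + L"
    unfolding Aa_eq L_def using n1 v0 by (subst ln_mult) auto
  have Aa1: "1 \<le> Aa" unfolding Aa_eq using n1 inner_ge
    by (metis exp_ge_add_one_self le_add_same_cancel2 mult_mono' not_one_le_zero of_nat_1 of_nat_le_iff
              order_trans  zero_le_one mult_1 zero_le_one)
  define mu where "mu = ln Aa"
  have mu0: "0 \<le> mu" unfolding mu_def using Aa1 by simp
  have emu: "exp mu = Aa" unfolding mu_def using Aa_pos by simp
  have tailj: "measure M {x\<in>space M. K \<le> \<bar>X i j x\<bar>} \<le> exp (3 * v * (Aa - 1)) / exp (mu * K)" if "j < m" for j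
    using tail_abs[OF P sp[OF i that] ab[OF i that] mu0 meas] unfolding emu .
  have E1sub: "E1 \<subseteq> (\<Union>j\<in>{..<m}. {x\<in>space M. K \<le> \<bar>X i j x\<bar>})"
    unfolding E1_def by force
  have "measure M E1 \<le> measure M (\<Union>j\<in>{..<m}. {x\<in>space M. K \<le> \<bar>X i j x\<bar>})"
    by (rule finite_measure_mono[OF E1sub]) measurable
  also have "\<dots> \<le> (\<Sum>j\<in>{..<m}. measure M {x\<in>space M. K \<le> \<bar>X i j x\<bar>})"
    by (rule finite_measure_subadditive_finite) auto
  also have "\<dots> \<le> (\<Sum>j\<in>{..<m}. exp (3 * v * (Aa - 1)) / exp (mu * K))"
    by (rule sum_mono) (use tailj in auto)
  also have "\<dots> = exp (3 * v * (Aa - 1)) * (real m / exp (mu * K))" by simp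
  also have "\<dots> \<le> 3 * real n powr (- K)"
  proof -
    have "3 * v * (Aa - 1) \<le> 3 * v * Aa" using v0 by simp
    also have "3 * v * Aa = 1 / (2 * exp 1)" unfolding Aa_def using v0 by simp
    also have "\<dots> \<le> 1" using exp_ge_add_one_self[of 1] by (simp add: field_simps)
    finally have "exp (3 * v * (Aa - 1)) \<le> exp 1" by simp
    also have "exp (1::real) \<le> 3" using exp_le by simp
    finally have e3: "exp (3 * v * (Aa - 1)) \<le> 3" .
    have "real m = exp (ln (real m))" using m1 by simp
    also have "\<dots> \<le> exp (K * L)" using lnm unfolding L_def by simp
    finally have "real m / exp (mu * K) \<le> exp (K * L) / exp (mu * K)"
      by (simp add: divide_right_mono)
    also have "\<dots> = exp (- (K * ln (real n)))"
      unfolding mu_def lnAa by (simp add: exp_diff[symmetric] algebra_simps)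
    also have "\<dots> = real n powr (- K)" using n1 by (simp add: powr_def)
    finally have r: "real m / exp (mu * K) \<le> real n powr (- K)" .
    show ?thesis by (rule mult_mono[OF e3 r]) auto
  qed
  finally have bE1: "measure M E1 \<le> 3 * real n powr (- K)" .
  define c where "c = 3 * (exp 1 - 1) * real n * v"
  have c0: "0 \<le> c" unfolding c_def using v0 by (simp add: exp_ge_add_one_self)
  have c_half: "c \<le> 1 / 2"
  proof -
    have "exp 1 - 1 \<le> (exp (1::real))\<^sup>2"
      using exp_ge_add_one_self[of 1] by (simp add: power2_eq_square) (smt (verit) exp_gt_zero mult_le_cancel_left1)
    then have h: "3 * (exp 1 - 1) \<le> 3 * (exp (1::real))\<^sup>2" by simp
    have nv0: "0 \<le> real n * v" using v0 by simp
    have "c = (3 * (exp 1 - 1)) * (real n * v)" unfolding c_def by (simp add: mult.assoc)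
    also have "\<dots> \<le> (3 * (exp 1)\<^sup>2) * (real n * v)" by (rule mult_right_mono[OF h nv0])
    also have "\<dots> \<le> 1 / 2"
    proof -
      have "6 * (exp 1)\<^sup>2 * real n * v = 2 * ((3 * (exp 1)\<^sup>2) * (real n * v))" by (simp add: algebra_simps)
      then show ?thesis using vn by linarith
    qed
    finally show ?thesis .
  qed
  have intX: "integrable M (X k j)" if "k < n" "j < m" for k j
    using sp[OF that] unfolding sub_poisson_def by auto
  have intE: "integrable M (\<lambda>x. exp \<bar>X k j x\<bar>)" if "k < n" "j < m" for k j
    using mgf_abs(1)[OF P sp[OF that] ab[OF that], of 1] by simp
  have bE: "integral\<^sup>L M (\<lambda>x. exp \<bar>X k j x\<bar>) \<le> exp (3 * v * (exp 1 - 1))" if "k < n" "j < m" for k j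
    using mgf_abs(2)[OF P sp[OF that] ab[OF that], of 1] by simp
  have gE: "1 \<le> integral\<^sup>L M (\<lambda>x. exp \<bar>X k j x\<bar>)" if "k < n" "j < m" for k j
  proof -
    have "integral\<^sup>L M (\<lambda>x. 1::real) \<le> integral\<^sup>L M (\<lambda>x. exp \<bar>X k j x\<bar>)"
      by (rule integral_mono) (use intE[OF that] in auto)
    then show ?thesis by (simp add: prob_space)
  qed
  define Pj where "Pj j x = (\<Prod>k\<in>A. exp \<bar>X k j x\<bar>)" for j x
  define T where "T j = (\<Prod>k\<in>A. integral\<^sup>L M (\<lambda>x. exp \<bar>X k j x\<bar>))" for j
  have EZ: "integrable M (Z j) \<and> integral\<^sup>L M (Z j) \<le> exp (2 * c * v / K)" if j: "j < m" for j
  proof -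
    have ci1: "integrable M (\<lambda>x. Yt j x * Pj j x)"
      unfolding Yt_def Pj_def A_def
      by (rule column_indep(1)[OF P ind meas intX intE i j]) (use K0 j in auto)
    have ci2: "integral\<^sup>L M (\<lambda>x. Yt j x * Pj j x) = integral\<^sup>L M (Yt j) * T j"
      unfolding Yt_def Pj_def A_def T_def
      by (rule column_indep(2)[OF P ind meas intX intE i j]) (use K0 j in auto)
    have intY: "integrable M (Yt j)" unfolding Yt_def
      by (rule Bochner_Integration.integrable_bound[of _ "X i j"]) (use K0 intX[OF i j] in \<open>auto intro!: AE_I2\<close>)
    have EY: "integral\<^sup>L M (Yt j) \<le> v"
    proof -
      have "integral\<^sup>L M (Yt j) \<le> integral\<^sup>L M (\<lambda>x. \<bar>X i j x\<bar>)"
        by (rule integral_mono) (use intY intX[OF i j] in \<open>auto simp: Yt_def\<close>)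
      then show ?thesis using ab[OF i j] by simp
    qed
    have EY0: "0 \<le> integral\<^sup>L M (Yt j)" unfolding Yt_def using K0 by (intro integral_nonneg_AE AE_I2) auto
    define R where "R x = 1 + (1 / K) * (Yt j x * Pj j x) - (1 / K) * Yt j x" for x
    have intR: "integrable M R" unfolding R_def using ci1 intY by simp
    have ZR: "Z j x \<le> R x" for x
    proof -
      have u0: "0 \<le> Yt j x / K" unfolding Yt_def using K0 by simp
      have u1: "Yt j x / K \<le> 1" unfolding Yt_def using K0 by simp
      have "Z j x = exp ((Yt j x / K) * S j x)" unfolding Z_def by simp
      also have "\<dots> \<le> 1 + (Yt j x / K) * (exp (S j x) - 1)" by (rule exp_convex_ineq[OF u0 u1])
      also have "exp (S j x) = Pj j x" unfolding S_def Pj_def A_def by (simp add: exp_sum)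
      also have "1 + (Yt j x / K) * (Pj j x - 1) = R x" unfolding R_def using K0 by (simp add: field_simps)
      finally show ?thesis .
    qed
    have [measurable]: "Z j \<in> borel_measurable M"
    proof -
      have "Z j = (\<lambda>x. exp (Yt j x * S j x / K))" unfolding Z_def by (rule ext) simp
      also have "\<dots> \<in> borel_measurable M" unfolding Yt_def S_def by measurable
      finally show ?thesis .
    qed
    have intZ: "integrable M (Z j)"
      by (rule Bochner_Integration.integrable_bound[OF intR]) (auto intro!: AE_I2 simp: Z_def order_trans[OF _ ZR])
    have "integral\<^sup>L M (Z j) \<le> integral\<^sup>L M R"
      by (rule integral_mono[OF intZ intR]) (rule ZR)
    also have "integral\<^sup>L M R = 1 + (integral\<^sup>L M (Yt j) / K) * (T j - 1)"
      unfolding R_def using ci1 intY ci2 K0 by (simp add: prob_space field_simps)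
    also have "\<dots> \<le> 1 + (v / K) * (2 * c)"
    proof -
      have T1: "1 \<le> T j" unfolding T_def by (rule prod_ge_1) (use gE j in \<open>auto simp: A_def\<close>)
      have "T j \<le> (\<Prod>k\<in>A. exp (3 * v * (exp 1 - 1)))"
        unfolding T_def by (rule prod_mono) (use bE gE j in \<open>auto simp: A_def intro: order_trans[OF zero_le_one]\<close>)
      also have "\<dots> = exp (real (card A) * (3 * v * (exp 1 - 1)))" by (simp add: exp_of_nat_mult)
      also have "\<dots> \<le> exp c"
      proof -
        have "card A \<le> card {0..<n}" unfolding A_def by (rule card_mono) auto
        then have "card A \<le> n" by simp
        then have "real (card A) * (3 * v * (exp 1 - 1)) \<le> real n * (3 * v * (exp 1 - 1))"
          using v0 by (intro mult_right_mono) (auto simp: exp_ge_add_one_self)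
        then show ?thesis unfolding c_def by (simp add: algebra_simps)
      qed
      also have "\<dots> \<le> 1 + 2 * c" using exp_bound_lemma[of c] c0 c_half by simp
      finally have T2: "T j - 1 \<le> 2 * c" by simp
      have "integral\<^sup>L M (Yt j) / K \<le> v / K" using EY K0 by (simp add: divide_right_mono)
      then have "(integral\<^sup>L M (Yt j) / K) * (T j - 1) \<le> (v / K) * (2 * c)"
        by (rule mult_mono) (use T1 T2 EY0 K0 v0 c0 in auto)
      then show ?thesis by simp
    qed
    also have "\<dots> \<le> exp (2 * c * v / K)" using exp_ge_add_one_self[of "2 * c * v / K"] by (simp add: algebra_simps)
    finally show ?thesis using intZ by simp
  qed
  define Gb where "Gb = (\<lambda>j (f :: nat \<times> nat \<Rightarrow> real). exp (min \<bar>f (i,j)\<bar> K * (\<Sum>k\<in>{0..<n}-{i}. \<bar>f (k,j)\<bar>) / K))"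
  have indB: "indep_vars (\<lambda>j. PiM ({0..<n}\<times>{j}) (\<lambda>_. borel))
      (\<lambda>j \<omega>. restrict (\<lambda>p. (\<lambda>(i, j). X i j) p \<omega>) ({0..<n}\<times>{j})) {0..<m}"
    by (rule indep_vars_restrict[OF ind]) (auto simp: disjoint_family_on_def)
  have indZ0: "indep_vars (\<lambda>_. borel)
      (\<lambda>j \<omega>. Gb j (restrict (\<lambda>p. (\<lambda>(i, j). X i j) p \<omega>) ({0..<n}\<times>{j}))) {0..<m}"
    by (rule indep_vars_compose2[OF indB]) (unfold Gb_def, rule meas_test[OF i])
  have Zeq: "(\<lambda>\<omega>. Gb j (restrict (\<lambda>p. (\<lambda>(i, j). X i j) p \<omega>) ({0..<n}\<times>{j}))) = Z j" if "j \<in> {..<m}" for j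
    using i by (auto simp: Gb_def Z_def Yt_def S_def A_def intro!: ext sum.cong)
  have eqv: "indep_vars (\<lambda>_. borel)
      (\<lambda>j \<omega>. Gb j (restrict (\<lambda>p. (\<lambda>(i, j). X i j) p \<omega>) ({0..<n}\<times>{j}))) {0..<m}
      = indep_vars (\<lambda>_. borel) Z {0..<m}"
    by (rule indep_vars_cong) (use Zeq in auto)
  have "indep_vars (\<lambda>_. borel) Z {0..<m}" by (rule iffD1[OF eqv indZ0])
  then have indZ: "indep_vars (\<lambda>_. borel) Z {..<m}" by (simp add: atLeast0LessThan)
  have intZ: "\<And>j. j \<in> {..<m} \<Longrightarrow> integrable M (Z j)" using EZ by auto
  have intPZ: "integrable M (\<lambda>x. \<Prod>j\<in>{..<m}. Z j x)"
    by (rule indep_vars_integrable[OF _ indZ intZ]) simp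
  have EPZ: "integral\<^sup>L M (\<lambda>x. \<Prod>j\<in>{..<m}. Z j x) = (\<Prod>j\<in>{..<m}. integral\<^sup>L M (Z j))"
    by (rule indep_vars_lebesgue_integral[OF _ indZ intZ]) simp
  have "measure M E2 \<le> integral\<^sup>L M (\<lambda>x. \<Prod>j\<in>{..<m}. Z j x) / exp (a / K)"
    unfolding E2_def
    by (rule integral_Markov_inequality_measure[where A="space M", OF intPZ])
       (auto intro!: AE_I2 prod_nonneg simp: Z_def)
  also have "\<dots> \<le> (\<Prod>j\<in>{..<m}. exp (2 * c * v / K)) / exp (a / K)"
    unfolding EPZ
    by (intro divide_right_mono prod_mono) (use EZ in \<open>auto intro!: integral_nonneg_AE AE_I2 simp: Z_def\<close>)
  also have "\<dots> = exp (real m * (2 * c * v / K)) / exp (a / K)"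
    by (simp only: prod_constant card_lessThan exp_of_nat_mult)
  also have "\<dots> = exp (real m * (2 * c * v / K) - a / K)"
    by (rule exp_diff[symmetric])
  also have "\<dots> \<le> exp (- (sqrt t * real n * real m * v\<^sup>2 / (10 * sqrt 6)))"
  proof -
    define B where "B = real n * real m * v\<^sup>2"
    have B0: "0 \<le> B" unfolding B_def by simp
    define r where "r = sqrt t"
    define q where "q = sqrt (6::real)"
    have r0: "0 < r" unfolding r_def using t6 by simp
    have q0: "0 < q" unfolding q_def by simp
    have rr: "r * r = t" unfolding r_def using t6 by simp
    have qq: "q * q = 6" unfolding q_def by simp
    have Kq: "K = r / (2 * q)" unfolding Kdef r_def q_def ..
    have e3: "exp 1 \<le> (3::real)" using exp_le by simp
    have cB: "real m * (2 * c * v) \<le> 12 * B"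
    proof -
      have "real m * (2 * c * v) = 6 * (exp 1 - 1) * B" unfolding c_def B_def by (simp add: power2_eq_square algebra_simps)
      also have "\<dots> \<le> 6 * 2 * B" using e3 B0 by (intro mult_right_mono) auto
      finally show ?thesis by simp
    qed
    have aB: "a = (4 + 5 * t) * B" unfolding a_def B_def by simp
    have "real m * (2 * c * v / K) - a / K = (real m * (2 * c * v) - a) / K" by (simp add: diff_divide_distrib)
    also have "\<dots> \<le> (12 * B - (4 + 5 * t) * B) / K"
      using cB aB K0 by (intro divide_right_mono) auto
    also have "\<dots> = (8 - 5 * t) * B * (2 * q) / r" unfolding Kq using r0 q0 by (simp add: field_simps)
    also have "\<dots> \<le> - (r * B / (10 * q))"
    proof -
      have "(8 - 5 * t) * B * (2 * q) * (10 * q) = (8 - 5 * t) * B * 20 * (q * q)" by (simp add: algebra_simps)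
      also have "\<dots> = (8 - 5 * t) * B * 120" using qq by simp
      also have "\<dots> \<le> - (t * B)"
      proof -
        have "((8 - 5 * t) * 120 + t) * B \<le> 0" by (rule mult_nonpos_nonneg) (use t6 B0 in auto)
        moreover have "((8 - 5 * t) * 120 + t) * B = (8 - 5 * t) * B * 120 + t * B" by (simp add: algebra_simps)
        ultimately show ?thesis by linarith
      qed
      also have "\<dots> = - (r * B * r)" using rr by (simp add: algebra_simps)
      finally have h: "(8 - 5 * t) * B * (2 * q) * (10 * q) \<le> - (r * B * r)" .
      show ?thesis using h r0 q0 by (simp add: field_simps)
    qed
    finally show ?thesis unfolding B_def r_def q_def by (simp add: mult.assoc)
  qed
  also have "\<dots> \<le> sqrt t * exp (- (sqrt t * real n * real m * v\<^sup>2 / (10 * sqrt 6)))"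
  proof -
    have "1 \<le> sqrt t" using t6 by simp
    then show ?thesis by (simp add: mult_le_cancel_right1)
  qed
  finally have bE2: "measure M E2 \<le> sqrt t * exp (- (sqrt t * real n * real m * v\<^sup>2 / (10 * sqrt 6)))" .
  show ?thesis unfolding bad_eq using split bE1 bE2 unfolding Kdef by linarith
qed

theorem lemma6p5:
  fixes M :: "'a measure" and X :: "nat \<Rightarrow> nat \<Rightarrow> 'a \<Rightarrow> real"
    and n m :: nat and sigma2 s t :: real
  assumes "prob_space M"
    and "1 \<le> n" and "n \<le> m"
    and "prob_space.indep_vars M (\<lambda>_. borel) (\<lambda>(i, j). X i j) ({0..<n} \<times> {0..<m})"
    and "\<And>i j x. i < n \<Longrightarrow> j < m \<Longrightarrow> x \<in> space M \<Longrightarrow> X i j x \<in> \<int>"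
    and "\<And>i j. i < n \<Longrightarrow> j < m \<Longrightarrow> sub_poisson M (X i j) sigma2"
    and "\<And>i j. i < n \<Longrightarrow> j < m \<Longrightarrow> integral\<^sup>L M (\<lambda>x. \<bar>X i j x\<bar>) \<le> sigma2"
    and "8 * ln (exp 1 * real n) \<le> real m * sigma2"
    and "6 * (exp 1)\<^sup>2 * real n * sigma2 \<le> 1"
    and "s > 0"
    and "t \<ge> max 6 (96 * (ln (real m))\<^sup>2 / (ln (1 / (6 * exp 1 * real n * sigma2)))\<^sup>2)"
  shows "measure M {x \<in> space M.
           (1 / real n) * (\<Sum>i<n. if offdiag_row_norm n m (\<lambda>i j. X i j x) i
                                        \<le> (4 + 5 * t) * real n * real m * sigma2\<^sup>2
                                   then 1 else 0) \<le> 1 - s}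
         \<le> (1 / s) * (sqrt t * exp (- (sqrt t * real n * real m * sigma2\<^sup>2 / (10 * sqrt 6)))
                      + 3 * real n powr (- (sqrt t / (2 * sqrt 6))))"
proof -
  note P = assms(1) and n1 = assms(2) and nm = assms(3) and ind = assms(4)
    and sp = assms(6) and ab = assms(7) and h8 = assms(8) and vn = assms(9) and s0 = assms(10)
    and tb = assms(11)
  interpret prob_space M by fact
  define v where "v = sigma2"
  define Bd where "Bd = sqrt t * exp (- (sqrt t * real n * real m * sigma2\<^sup>2 / (10 * sqrt 6)))
                      + 3 * real n powr (- (sqrt t / (2 * sqrt 6)))"
  define thr where "thr = (4 + 5 * t) * real n * real m * sigma2\<^sup>2"
  have m1: "1 \<le> m" using n1 nm by simp
  have t6: "6 \<le> t" using tb by simp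
  have v0: "0 < sigma2"
  proof -
    have "1 \<le> ln (exp 1 * real n)" using n1 by (simp add: ln_mult)
    then have "8 \<le> real m * sigma2" using h8 by linarith
    then show ?thesis using m1 by (metis mult_eq_0_iff not_le linorder_not_less
        zero_less_mult_pos le_less_trans zero_less_numeral order_less_le_trans of_nat_0_le_iff
        mult_pos_pos less_eq_real_def not_less_iff_gr_or_eq)
  qed
  define L where "L = ln (1 / (6 * exp 1 * real n * sigma2))"
  have L1: "1 \<le> L"
  proof -
    have eq: "exp 1 * (6 * exp 1 * real n * sigma2) = 6 * (exp 1)\<^sup>2 * real n * sigma2" by (simp add: power2_eq_square)
    have "exp 1 * (6 * exp 1 * real n * sigma2) \<le> 1" using vn eq by linarith
    moreover have "0 < 6 * exp 1 * real n * sigma2" using v0 n1 by simp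
    ultimately have "exp 1 \<le> 1 / (6 * exp 1 * real n * sigma2)" by (simp add: field_simps)
    then show ?thesis unfolding L_def
      by (metis ln_exp exp_gt_zero ln_le_cancel_iff order_less_le_trans)
  qed
  define K where "K = sqrt t / (2 * sqrt 6)"
  have lnm: "ln (real m) \<le> K * L"
  proof -
    have "96 * (ln (real m))\<^sup>2 / L\<^sup>2 \<le> t" using tb unfolding L_def by simp
    then have "96 * (ln (real m))\<^sup>2 \<le> t * L\<^sup>2" using L1 by (simp add: pos_divide_le_eq)
    then have "(sqrt 96 * ln (real m))\<^sup>2 \<le> (sqrt t * L)\<^sup>2" using t6 by (simp add: power_mult_distrib)
    then have h: "sqrt 96 * ln (real m) \<le> sqrt t * L"
      by (rule power2_le_imp_le) (use L1 t6 in auto)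
    have s24: "sqrt (24::real) = 2 * sqrt 6" using real_sqrt_mult[of 4 6] by simp
    have "2 * sqrt 6 \<le> sqrt (96::real)" unfolding s24[symmetric] by simp
    moreover have "0 \<le> ln (real m)" using m1 by simp
    ultimately have "2 * sqrt 6 * ln (real m) \<le> sqrt 96 * ln (real m)" by (rule mult_right_mono)
    with h have "2 * sqrt 6 * ln (real m) \<le> sqrt t * L" by linarith
    then show ?thesis unfolding K_def by (simp add: field_simps)
  qed
  have measX: "X i j \<in> borel_measurable M" if "i < n" "j < m" for i j
  proof -
    have "\<forall>p\<in>{0..<n} \<times> {0..<m}. (\<lambda>(i, j). X i j) p \<in> borel_measurable M"
      using ind unfolding indep_vars_def by auto
    then show ?thesis using that by auto
  qed
  define X' where "X' = (\<lambda>i j. if i < n \<and> j < m then X i j else (\<lambda>_. 0::real))"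
  have measX'[measurable]: "\<And>i j. X' i j \<in> borel_measurable M" unfolding X'_def using measX by auto
  have ind': "indep_vars (\<lambda>_. borel) (\<lambda>(i, j). X' i j) ({0..<n} \<times> {0..<m})"
  proof -
    have "indep_vars (\<lambda>_. borel) (\<lambda>(i, j). X i j) ({0..<n} \<times> {0..<m}) =
          indep_vars (\<lambda>_. borel) (\<lambda>(i, j). X' i j) ({0..<n} \<times> {0..<m})"
      by (rule indep_vars_cong) (auto simp: X'_def)
    then show ?thesis using ind by simp
  qed
  have sp': "\<And>i j. i < n \<Longrightarrow> j < m \<Longrightarrow> sub_poisson M (X' i j) sigma2" using sp by (simp add: X'_def)
  have ab': "\<And>i j. i < n \<Longrightarrow> j < m \<Longrightarrow> integral\<^sup>L M (\<lambda>x. \<bar>X' i j x\<bar>) \<le> sigma2" using ab by (simp add: X'_def)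
  have roweq: "offdiag_row_norm n m (\<lambda>i j. X' i j x) i = offdiag_row_norm n m (\<lambda>i j. X i j x) i" if "i < n" for i x
    unfolding offdiag_row_norm_def X'_def using that by (auto intro!: sum.cong)
  define bad where "bad i = {x \<in> space M. \<not> offdiag_row_norm n m (\<lambda>i j. X' i j x) i \<le> thr}" for i
  have [measurable]: "bad i \<in> sets M" for i unfolding bad_def offdiag_row_norm_def by measurable
  have bbad: "measure M (bad i) \<le> Bd" if "i < n" for i
    unfolding bad_def thr_def Bd_def
    by (rule row_bound[OF P ind' measX' sp' ab' v0 vn n1 m1 K_def t6 lnm[unfolded L_def] that])
  have badsub: "bad i \<subseteq> space M" for i unfolding bad_def by auto
  define f where "f x = (\<Sum>i<n. indicator (bad i) x :: real)" for x
  have intf: "integrable M f" unfolding f_def by (rule Bochner_Integration.integrable_sum, rule integrable_real_indicator) (auto simp: less_top[symmetric])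
  have Ef: "integral\<^sup>L M f = (\<Sum>i<n. measure M (bad i))"
    unfolding f_def by (subst Bochner_Integration.integral_sum) (auto intro!: integrable_real_indicator simp: Int_absorb2[OF badsub] less_top[symmetric])
  have "{x \<in> space M. (1 / real n) * (\<Sum>i<n. if offdiag_row_norm n m (\<lambda>i j. X i j x) i \<le> thr then 1 else 0) \<le> 1 - s}
        \<subseteq> {x \<in> space M. real n * s \<le> f x}"
  proof safe
    fix x assume x: "x \<in> space M"
      and le: "(1 / real n) * (\<Sum>i<n. if offdiag_row_norm n m (\<lambda>i j. X i j x) i \<le> thr then 1 else 0) \<le> 1 - s"
    have "(\<Sum>i<n. (if offdiag_row_norm n m (\<lambda>i j. X i j x) i \<le> thr then 1 else 0) + indicator (bad i) x)
          = (\<Sum>i<n. (1::real))"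
      by (rule sum.cong) (auto simp: bad_def x roweq indicator_def)
    then have sumeq: "(\<Sum>i<n. if offdiag_row_norm n m (\<lambda>i j. X i j x) i \<le> thr then 1 else 0) + f x = real n"
      unfolding f_def by (simp add: sum.distrib)
    have "(\<Sum>i<n. if offdiag_row_norm n m (\<lambda>i j. X i j x) i \<le> thr then 1 else 0) \<le> real n * (1 - s)"
      using le n1 by (simp add: field_simps)
    then show "real n * s \<le> f x" using sumeq by (simp add: algebra_simps)
  qed
  then have "measure M {x \<in> space M. (1 / real n) * (\<Sum>i<n. if offdiag_row_norm n m (\<lambda>i j. X i j x) i \<le> thr then 1 else 0) \<le> 1 - s}
        \<le> measure M {x \<in> space M. real n * s \<le> f x}"
    by (rule finite_measure_mono) (unfold f_def, measurable)
  also have "\<dots> \<le> integral\<^sup>L M f / (real n * s)"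
    by (rule integral_Markov_inequality_measure[where A="space M", OF intf])
       (use n1 s0 in \<open>auto intro!: AE_I2 sum_nonneg simp: f_def\<close>)
  also have "\<dots> \<le> (real n * Bd) / (real n * s)"
  proof -
    have "integral\<^sup>L M f \<le> (\<Sum>i<n. Bd)" unfolding Ef by (rule sum_mono) (use bbad in auto)
    then show ?thesis using n1 s0 by (intro divide_right_mono) auto
  qed
  also have "\<dots> = (1 / s) * Bd" using n1 by simp
  finally show ?thesis unfolding thr_def Bd_def .
qed

end
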